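(* Let $F$ be the unique series in $\mathbb{Q}[x,\bar x,y,\bar y][[t]]$ satisfying $(1-St)F=\bar x\bar y-\bar x t[x^0][y^<]F-\bar y t[y^0][x^<]F$. Let $F_1=[x^<][y^<]F$, $F_2=F-F_1$, and, writing $F_2=\sum c_{i,j,n}x^iy^jt^n$, let $F_2^D=\sum_{i\ge0}\sum_n c_{i,i,n}x^iy^it^n$ and $F_2^L=\sum_{i\ge0}\sum_{j\le i-1}\sum_n c_{i,j,n}x^iy^jt^n$. Then $$(1-St)\,F_2^L=t\,[\bar x]F_1+\bigl(tx+t\bar y-\tfrac12\bigr)F_2^D-t\bar x\,[x^0]F_2^L.$$
   Context: Notation: $\bar x=x^{-1}$, $\bar y=y^{-1}$, $S=x+y+\bar x+\bar y$; series in $\mathbb{Q}[x,\bar x,y,\bar y][[t]]$. For $G=\sum c_{i,j,n}x^iy^jt^n$: $[x^0]G=\sum_{j,n}c_{0,j,n}y^jt^n$, $[y^0]G=\sum_{i,n}c_{i,0,n}x^it^n$, $[\bar x]G=\sum_{j,n}c_{-1,j,n}y^jt^n$ (coefficient of $x^{-1}$); $[x^<]G$ (resp. $[y^<]G$) is the sum of terms with negative $x$-exponent (resp. $y$-exponent). *)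

theory Defs
  imports Main "HOL.Rat"
begin

text \<open>A series in Q[x, 1/x, y, 1/y][[t]] is represented by its coefficient function:
  G i j n is the coefficient of x^i y^j t^n.  Membership in the ring means that for each
  power of t only finitely many Laurent monomials occur.\<close>

type_synonym ser = "int \<Rightarrow> int \<Rightarrow> nat \<Rightarrow> rat"

definition in_ring :: "ser \<Rightarrow> bool" where
  "in_ring G \<longleftrightarrow> (\<forall>n. finite {(i, j). G i j n \<noteq> 0})"

definition sadd :: "ser \<Rightarrow> ser \<Rightarrow> ser" where
  "sadd F G = (\<lambda>i j n. F i j n + G i j n)"

definition ssub :: "ser \<Rightarrow> ser \<Rightarrow> ser" where
  "ssub F G = (\<lambda>i j n. F i j n - G i j n)"

definition sscale :: "rat \<Rightarrow> ser \<Rightarrow> ser" where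
  "sscale c G = (\<lambda>i j n. c * G i j n)"

definition xmul :: "int \<Rightarrow> ser \<Rightarrow> ser" where
  "xmul a G = (\<lambda>i j n. G (i - a) j n)"

definition ymul :: "int \<Rightarrow> ser \<Rightarrow> ser" where
  "ymul b G = (\<lambda>i j n. G i (j - b) n)"

definition tmul :: "ser \<Rightarrow> ser" where
  "tmul G = (\<lambda>i j n. if n = 0 then 0 else G i j (n - 1))"

definition monom :: "int \<Rightarrow> int \<Rightarrow> nat \<Rightarrow> ser" where
  "monom a b k = (\<lambda>i j n. if i = a \<and> j = b \<and> n = k then 1 else 0)"

definition Smul :: "ser \<Rightarrow> ser" where
  "Smul G = sadd (sadd (xmul 1 G) (xmul (-1) G)) (sadd (ymul 1 G) (ymul (-1) G))"

definition one_minus_St :: "ser \<Rightarrow> ser" where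
  "one_minus_St G = ssub G (tmul (Smul G))"

definition coeff_x0 :: "ser \<Rightarrow> ser" where
  "coeff_x0 G = (\<lambda>i j n. if i = 0 then G 0 j n else 0)"

definition coeff_y0 :: "ser \<Rightarrow> ser" where
  "coeff_y0 G = (\<lambda>i j n. if j = 0 then G i 0 n else 0)"

definition coeff_xbar :: "ser \<Rightarrow> ser" where
  "coeff_xbar G = (\<lambda>i j n. if i = 0 then G (-1) j n else 0)"

definition neg_x :: "ser \<Rightarrow> ser" where
  "neg_x G = (\<lambda>i j n. if i < 0 then G i j n else 0)"

definition neg_y :: "ser \<Rightarrow> ser" where
  "neg_y G = (\<lambda>i j n. if j < 0 then G i j n else 0)"

definition diag_part :: "ser \<Rightarrow> ser" where
  "diag_part G = (\<lambda>i j n. if 0 \<le> i \<and> j = i then G i j n else 0)"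

definition low_part :: "ser \<Rightarrow> ser" where
  "low_part G = (\<lambda>i j n. if 0 \<le> i \<and> j \<le> i - 1 then G i j n else 0)"

end

theory Submission
  imports Defs
begin

lemma tmul_Suc[simp]: "tmul G i j (Suc m) = G i j m" by (simp add: tmul_def)
lemma tmul_0[simp]: "tmul G i j 0 = 0" by (simp add: tmul_def)

theorem mainTheorem10:
  fixes F :: ser
  assumes "in_ring F"
    and "one_minus_St F =
           ssub (ssub (monom (-1) (-1) 0)
                      (xmul (-1) (tmul (coeff_x0 (neg_y F)))))
                (ymul (-1) (tmul (coeff_y0 (neg_x F))))"
  defines "F1 \<equiv> neg_x (neg_y F)"
  defines "F2 \<equiv> ssub F F1"
  shows "one_minus_St (low_part F2) =
           ssub (sadd (tmul (coeff_xbar F1))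
                      (ssub (sadd (tmul (xmul 1 (diag_part F2))) (tmul (ymul (-1) (diag_part F2))))
                            (sscale (1/2) (diag_part F2))))
                (tmul (xmul (-1) (coeff_x0 (low_part F2))))"
proof -
  have rec0: "F i j 0 = (if i = -1 \<and> j = -1 then 1 else 0)" for i j
    using fun_cong[OF fun_cong[OF fun_cong[OF assms(2), of i], of j], of 0]
    by (simp add: one_minus_St_def ssub_def tmul_def monom_def xmul_def ymul_def)
  have recS: "F i j (Suc m) = F (i-1) j m + F (i+1) j m + F i (j-1) m + F i (j+1) m
      - (if i = -1 \<and> j < 0 then F 0 j m else 0) - (if j = -1 \<and> i < 0 then F i 0 m else 0)" for i j m
    using fun_cong[OF fun_cong[OF fun_cong[OF assms(2), of i], of j], of "Suc m"]
    by (cases "i = -1"; cases "j = -1"; simp add: one_minus_St_def ssub_def monom_def xmul_def ymul_def Smul_def sadd_def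
        coeff_x0_def coeff_y0_def neg_x_def neg_y_def algebra_simps)
  have sym: "\<forall>i j. F i j n = F j i n" for n
  proof (induction n)
    case 0 then show ?case by (simp add: rec0)
  next
    case (Suc n)
    show ?case
    proof (intro allI)
      fix i j
      show "F i j (Suc n) = F j i (Suc n)"
        unfolding recS using Suc.IH by (simp add: algebra_simps)
    qed
  qed
  show ?thesis
  proof (intro ext)
    fix i j n
    show "one_minus_St (low_part F2) i j n = ssub (sadd (tmul (coeff_xbar F1))
                      (ssub (sadd (tmul (xmul 1 (diag_part F2))) (tmul (ymul (-1) (diag_part F2))))
                            (sscale (1/2) (diag_part F2))))
                (tmul (xmul (-1) (coeff_x0 (low_part F2)))) i j n"
    proof (cases n)
      case 0
      then show ?thesis
        by (simp add: F2_def F1_def one_minus_St_def ssub_def tmul_def xmul_def ymul_def sadd_def sscale_def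
          diag_part_def low_part_def neg_x_def neg_y_def rec0)
    next
      case (Suc m)
      have F2e: "F2 a b k = (if a < 0 \<and> b < 0 then 0 else F a b k)" for a b k
        by (simp add: F2_def F1_def ssub_def neg_x_def neg_y_def)
      have F1e: "F1 a b k = (if a < 0 \<and> b < 0 then F a b k else 0)" for a b k
        by (simp add: F1_def neg_x_def neg_y_def)
      have lhs: "one_minus_St (low_part F2) i j n =
          low_part F2 i j (Suc m) - (low_part F2 (i-1) j m + low_part F2 (i+1) j m
           + low_part F2 i (j-1) m + low_part F2 i (j+1) m)"
        by (simp add: Suc one_minus_St_def ssub_def tmul_def Smul_def sadd_def xmul_def ymul_def)
      have rhs: "ssub (sadd (tmul (coeff_xbar F1))
                      (ssub (sadd (tmul (xmul 1 (diag_part F2))) (tmul (ymul (-1) (diag_part F2))))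
                            (sscale (1/2) (diag_part F2))))
                (tmul (xmul (-1) (coeff_x0 (low_part F2)))) i j n =
          (if i = 0 then F1 (-1) j m else 0) + (diag_part F2 (i-1) j m + diag_part F2 i (j+1) m
            - 1/2 * diag_part F2 i j (Suc m)) - (if i = -1 then low_part F2 0 j m else 0)"
        by (simp add: Suc ssub_def tmul_def sadd_def xmul_def ymul_def sscale_def coeff_xbar_def coeff_x0_def)
      show ?thesis
      proof (cases "i \<ge> 0")
        case True
        consider "j \<le> i - 1" | "j = i" | "j \<ge> i + 1" by linarith
        then show ?thesis
        proof cases
          case 1
          then show ?thesis unfolding lhs rhs using True
            by (auto simp add: low_part_def diag_part_def F2e F1e recS)
        next
          case 2
          have "F i i (Suc m) = 2 * (F (i+1) i m + F i (i-1) m)"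
            using True sym[of m] by (simp add: recS)
          then show ?thesis unfolding lhs rhs using True 2
            by (auto simp add: low_part_def diag_part_def F2e F1e field_simps)
        next
          case 3
          then show ?thesis unfolding lhs rhs using True
            by (auto simp add: low_part_def diag_part_def F2e F1e)
        qed
      next
        case False
        then show ?thesis unfolding lhs rhs
          by (auto simp add: low_part_def diag_part_def F2e F1e)
      qed
    qed
  qed
qed

end
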